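(* Let $l_1\le l_2\le\cdots\le l_k$ be nonnegative integers with $L=l_1+\cdots+l_k\ge1$. Write $h_{l_1}(z)\cdots h_{l_k}(z)=\sum_{p\ge0}c_p h_p(z)$. Then $|c_p|\le(2L)^{L-l_k}$ for every $p$.
   Context: $h_j$ denotes the $j$-th monic probabilists' Hermite polynomial: $h_0=1$, $h_1(z)=z$, $h_{j+1}(z)=zh_j(z)-jh_{j-1}(z)$; they are orthogonal under the standard Gaussian measure with $\mathbb E[h_p^2]=p!$. *)

theory Defs
  imports "HOL-Computational_Algebra.Polynomial"
begin

text \<open>Monic probabilists' Hermite polynomials:
  h_0 = 1, h_1 = z, h_(j+1) = z h_j - j h_(j-1).\<close>
fun herm :: "nat \<Rightarrow> real poly" where
  "herm 0 = 1"
| "herm (Suc 0) = [:0, 1:]"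
| "herm (Suc (Suc n)) = [:0, 1:] * herm (Suc n) - smult (real (Suc n)) (herm n)"

end

theory Submission
  imports Defs
begin

lemma herm_deg: "degree (herm n) = n \<and> coeff (herm n) n = 1"
proof (induction n rule: herm.induct)
  case 1 then show ?case by simp
next
  case 2 then show ?case by simp
next
  case (3 n)
  let ?A = "[:0, 1:] * herm (Suc n)"
  have cA: "coeff ?A (Suc (Suc n)) = 1" using 3 by simp
  have dA: "degree ?A \<le> Suc (Suc n)"
    using 3 degree_mult_le[of "[:0,1:]" "herm (Suc n)"] by simp
  have dB: "degree (smult (real (Suc n)) (herm n)) \<le> n" using 3 by simp
  have cB: "coeff (smult (real (Suc n)) (herm n)) (Suc (Suc n)) = 0"
    using dB by (simp add: coeff_eq_0)
  have c: "coeff (herm (Suc (Suc n))) (Suc (Suc n)) = 1" using cA cB by simp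
  have "degree (herm (Suc (Suc n))) \<le> Suc (Suc n)"
    using dA dB by (simp add: degree_diff_le)
  moreover have "degree (herm (Suc (Suc n))) \<ge> Suc (Suc n)"
    using c by (metis le_degree zero_neq_one)
  ultimately have "degree (herm (Suc (Suc n))) = Suc (Suc n)" by (rule antisym)
  then show ?case using c by blast
qed

lemma smult_sum_right: "smult a (sum f A) = sum (\<lambda>x. smult a (f x)) A"
  by (induction A rule: infinite_finite_induct) (simp_all add: smult_add_right)

lemma herm_indep: "(\<Sum>p\<le>K. smult (d p) (herm p)) = 0 \<Longrightarrow> \<forall>p\<le>K. d p = 0"
proof (induction K)
  case 0 then show ?case using herm_deg[of 0] by simp
next
  case (Suc K)
  have "coeff (\<Sum>p\<le>Suc K. smult (d p) (herm p)) (Suc K) = d (Suc K)"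
  proof -
    have "coeff (\<Sum>p\<le>Suc K. smult (d p) (herm p)) (Suc K)
        = (\<Sum>p\<le>K. d p * coeff (herm p) (Suc K)) + d (Suc K) * coeff (herm (Suc K)) (Suc K)"
      by (simp add: coeff_sum)
    also have "(\<Sum>p\<le>K. d p * coeff (herm p) (Suc K)) = 0"
      by (intro sum.neutral ballI) (simp add: coeff_eq_0 herm_deg)
    finally show ?thesis using herm_deg[of "Suc K"] by simp
  qed
  moreover have "coeff (\<Sum>p\<le>Suc K. smult (d p) (herm p)) (Suc K) = 0"
    by (simp only: Suc.prems coeff_0)
  ultimately have dK: "d (Suc K) = 0" by simp
  then have "(\<Sum>p\<le>K. smult (d p) (herm p)) = 0" using Suc.prems by simp
  then show ?case using Suc.IH dK le_Suc_eq by auto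
qed

definition hexp :: "real \<Rightarrow> nat \<Rightarrow> real poly \<Rightarrow> bool" where
  "hexp B D Q \<longleftrightarrow> (\<exists>b. (\<forall>p>D. b p = 0) \<and> (\<forall>p. \<bar>b p\<bar> \<le> B) \<and>
       Q = (\<Sum>p\<le>D. smult (b p) (herm p)))"

lemma sum_ext:
  assumes "\<forall>p>D. b p = 0" "D \<le> D'"
  shows "(\<Sum>p\<le>D. smult (b p) (herm p)) = (\<Sum>p\<le>D'. smult (b p) (herm p))"
  by (rule sum.mono_neutral_left) (use assms in auto)

lemma hexp_mono: "hexp B D Q \<Longrightarrow> B \<le> B' \<Longrightarrow> D \<le> D' \<Longrightarrow> hexp B' D' Q"
  unfolding hexp_def
proof (elim exE conjE)
  fix b assume h: "\<forall>p>D. b p = 0" "\<forall>p. \<bar>b p\<bar> \<le> B" "Q = (\<Sum>p\<le>D. smult (b p) (herm p))"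
    and "B \<le> B'" "D \<le> D'"
  then show "\<exists>b. (\<forall>p>D'. b p = 0) \<and> (\<forall>p. \<bar>b p\<bar> \<le> B') \<and> Q = (\<Sum>p\<le>D'. smult (b p) (herm p))"
    using sum_ext[of D b D'] by (intro exI[of _ b] conjI) (auto intro: order_trans)
qed

lemma hexp_add: "hexp B1 D Q1 \<Longrightarrow> hexp B2 D Q2 \<Longrightarrow> hexp (B1 + B2) D (Q1 + Q2)"
  unfolding hexp_def
proof (elim exE conjE)
  fix b1 b2
  assume h: "\<forall>p>D. b1 p = 0" "\<forall>p. \<bar>b1 p\<bar> \<le> B1" "Q1 = (\<Sum>p\<le>D. smult (b1 p) (herm p))"
     "\<forall>p>D. b2 p = 0" "\<forall>p. \<bar>b2 p\<bar> \<le> B2" "Q2 = (\<Sum>p\<le>D. smult (b2 p) (herm p))"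
  show "\<exists>b. (\<forall>p>D. b p = 0) \<and> (\<forall>p. \<bar>b p\<bar> \<le> B1 + B2) \<and> Q1 + Q2 = (\<Sum>p\<le>D. smult (b p) (herm p))"
  proof (intro exI[of _ "\<lambda>p. b1 p + b2 p"] conjI allI impI)
    fix p show "\<bar>b1 p + b2 p\<bar> \<le> B1 + B2" using h(2,5)[rule_format, of p] by linarith
  qed (use h in \<open>auto simp: smult_add_left sum.distrib\<close>)
qed

lemma hexp_smult: "hexp B D Q \<Longrightarrow> hexp (\<bar>a\<bar> * B) D (smult a Q)"
  unfolding hexp_def
proof (elim exE conjE)
  fix b
  assume h: "\<forall>p>D. b p = 0" "\<forall>p. \<bar>b p\<bar> \<le> B" "Q = (\<Sum>p\<le>D. smult (b p) (herm p))"
  show "\<exists>b. (\<forall>p>D. b p = 0) \<and> (\<forall>p. \<bar>b p\<bar> \<le> \<bar>a\<bar> * B) \<and> smult a Q = (\<Sum>p\<le>D. smult (b p) (herm p))"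
  proof (intro exI[of _ "\<lambda>p. a * b p"] conjI allI impI)
    fix p show "\<bar>a * b p\<bar> \<le> \<bar>a\<bar> * B"
      using h(2) by (simp add: abs_mult mult_left_mono)
  qed (use h in \<open>auto simp: smult_sum_right\<close>)
qed

lemma x_herm: "[:0, 1:] * herm p = herm (Suc p) + smult (real p) (herm (p - 1))"
proof (cases p)
  case 0 then show ?thesis by simp
next
  case (Suc n) then show ?thesis by simp
qed

lemma hexp_x:
  assumes "hexp B D Q" "0 \<le> B"
  shows "hexp ((real D + 1) * B) (Suc D) ([:0, 1:] * Q)"
proof -
  obtain b where h: "\<forall>p>D. b p = 0" "\<forall>p. \<bar>b p\<bar> \<le> B" "Q = (\<Sum>p\<le>D. smult (b p) (herm p))"
    using assms(1) unfolding hexp_def by blast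
  define b' where "b' q = (if q = 0 then 0 else b (q - 1)) + real (Suc q) * b (Suc q)" for q
  have "[:0, 1:] * Q = (\<Sum>p\<le>D. smult (b p) ([:0, 1:] * herm p))"
    by (simp add: h(3) sum_distrib_left mult_smult_right)
  also have "\<dots> = (\<Sum>p\<le>D. smult (b p) (herm (Suc p))) + (\<Sum>p\<le>D. smult (b p * real p) (herm (p - 1)))"
    by (simp only: x_herm smult_add_right sum.distrib smult_smult)
  also have "(\<Sum>p\<le>D. smult (b p) (herm (Suc p))) = (\<Sum>q\<le>Suc D. smult (if q = 0 then 0 else b (q - 1)) (herm q))"
    by (simp add: sum.atMost_Suc_shift del: sum.atMost_Suc)
  also have "(\<Sum>p\<le>D. smult (b p * real p) (herm (p - 1))) = (\<Sum>p\<le>Suc (Suc D). smult (b p * real p) (herm (p - 1)))"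
    by (rule sum.mono_neutral_left) (use h(1) in auto)
  also have "\<dots> = (\<Sum>q\<le>Suc D. smult (real (Suc q) * b (Suc q)) (herm q))"
    by (simp add: sum.atMost_Suc_shift[of _ "Suc D"] del: sum.atMost_Suc) (simp add: mult.commute)
  finally have eq: "[:0, 1:] * Q = (\<Sum>q\<le>Suc D. smult (b' q) (herm q))"
    by (simp add: b'_def smult_add_left sum.distrib)
  have sup: "\<forall>q>Suc D. b' q = 0" using h(1) by (simp add: b'_def)
  have bd: "\<bar>b' q\<bar> \<le> (real D + 1) * B" for q
  proof -
    have t1: "\<bar>if q = 0 then 0 else b (q - 1)\<bar> \<le> B" using h(2) assms(2) by auto
    have t2: "\<bar>real (Suc q) * b (Suc q)\<bar> \<le> real D * B"
    proof (cases "Suc q \<le> D")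
      case True
      have "\<bar>real (Suc q) * b (Suc q)\<bar> = real (Suc q) * \<bar>b (Suc q)\<bar>" by (simp add: abs_mult)
      also have "\<dots> \<le> real D * B"
        using True h(2) assms(2) by (intro mult_mono) auto
      finally show ?thesis .
    next
      case False then show ?thesis using h(1) assms(2) by simp
    qed
    have "\<bar>b' q\<bar> \<le> B + real D * B" unfolding b'_def using t1 t2 by linarith
    then show ?thesis by (simp add: algebra_simps)
  qed
  show ?thesis unfolding hexp_def using eq sup bd by blast
qed

lemma hexp_herm_mult:
  assumes "1 \<le> L" "hexp B D Q" "0 \<le> B" "D + m \<le> L"
  shows "hexp ((2 * real L) ^ m * B) (D + m) (herm m * Q)"
  using assms(4)
proof (induction m rule: herm.induct)
  case 1 then show ?case using assms(2) by simp
next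
  case 2
  have "hexp ((real D + 1) * B) (Suc D) ([:0, 1:] * Q)" using hexp_x assms by blast
  moreover have "(real D + 1) * B \<le> 2 * real L * B"
    using 2 assms(1,3) by (intro mult_right_mono) auto
  ultimately show ?case using hexp_mono by fastforce
next
  case (3 n)
  let ?T = "2 * real L"
  have i1: "hexp (?T ^ Suc n * B) (D + Suc n) (herm (Suc n) * Q)" using 3 by simp
  have i0: "hexp (?T ^ n * B) (D + n) (herm n * Q)" using 3 by simp
  have B0: "0 \<le> ?T ^ n * B" using assms by simp
  have a: "hexp ((real (D + Suc n) + 1) * (?T ^ Suc n * B)) (Suc (D + Suc n)) ([:0, 1:] * (herm (Suc n) * Q))"
    using hexp_x[OF i1] B0 assms by simp
  have a': "hexp (real L * (?T ^ Suc n * B)) (D + Suc (Suc n)) ([:0, 1:] * (herm (Suc n) * Q))"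
    using hexp_mono[OF a, of "real L * (?T ^ Suc n * B)"] 3(3) B0 assms
    by (simp add: mult_right_mono)
  have b: "hexp (real (Suc n) * (?T ^ n * B)) (D + n) (smult (- real (Suc n)) (herm n * Q))"
    using hexp_smult[OF i0, of "- real (Suc n)"] by (simp only: abs_minus_cancel abs_of_nat)
  have b': "hexp (real L * (?T ^ n * B)) (D + Suc (Suc n)) (smult (- real (Suc n)) (herm n * Q))"
  proof -
    have le: "real (Suc n) * (?T ^ n * B) \<le> real L * (?T ^ n * B)"
      using 3(3) B0 by (intro mult_right_mono) auto
    show ?thesis using hexp_mono[OF b le, of "D + Suc (Suc n)"] by simp
  qed
  have "[:0, 1:] * (herm (Suc n) * Q) + smult (- real (Suc n)) (herm n * Q)
     = [:0, 1:] * (herm (Suc n) * Q) - smult (real (Suc n)) (herm n * Q)"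
    by (simp only: smult_minus_left diff_conv_add_uminus)
  also have "\<dots> = herm (Suc (Suc n)) * Q"
    by (simp only: herm.simps left_diff_distrib mult.assoc mult_smult_left)
  finally have eqp: "[:0, 1:] * (herm (Suc n) * Q) + smult (- real (Suc n)) (herm n * Q) = herm (Suc (Suc n)) * Q" .
  have s: "hexp (real L * (?T ^ Suc n * B) + real L * (?T ^ n * B)) (D + Suc (Suc n))
      (herm (Suc (Suc n)) * Q)"
    using hexp_add[OF a' b'] unfolding eqp .
  have "real L * (?T ^ Suc n * B) + real L * (?T ^ n * B) = (2 * real L * real L + real L) * (?T ^ n * B)"
    by (simp add: algebra_simps)
  also have "\<dots> \<le> (?T * ?T) * (?T ^ n * B)"
    using assms(1) B0 by (intro mult_right_mono) (auto simp: algebra_simps)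
  also have "\<dots> = ?T ^ Suc (Suc n) * B" by (simp add: algebra_simps)
  finally show ?case using hexp_mono[OF s] by blast
qed

lemma hexp_list:
  assumes "1 \<le> L"
  shows "hexp B D Q \<Longrightarrow> 0 \<le> B \<Longrightarrow> D + sum_list ms \<le> L \<Longrightarrow>
    hexp ((2 * real L) ^ sum_list ms * B) (D + sum_list ms) (prod_list (map herm ms) * Q)"
proof (induction ms arbitrary: B D Q)
  case Nil then show ?case by simp
next
  case (Cons m ms)
  have i: "hexp ((2 * real L) ^ sum_list ms * B) (D + sum_list ms) (prod_list (map herm ms) * Q)"
    using Cons by simp
  have "hexp ((2 * real L) ^ m * ((2 * real L) ^ sum_list ms * B)) (D + sum_list ms + m)
      (herm m * (prod_list (map herm ms) * Q))"
    using Cons.prems by (intro hexp_herm_mult[OF assms i]) auto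
  then show ?case by (simp add: power_add algebra_simps)
qed

theorem proposition5p8:
  fixes l :: "nat list" and c :: "nat \<Rightarrow> real" and N :: nat
  assumes "sorted l"
    and "sum_list l \<ge> 1"
    and "\<forall>p>N. c p = 0"
    and "prod_list (map herm l) = (\<Sum>p\<le>N. smult (c p) (herm p))"
  shows "\<forall>p. \<bar>c p\<bar> \<le> real (2 * sum_list l) ^ (sum_list l - last l)"
proof
  fix p
  let ?L = "sum_list l"
  let ?M = "sum_list (butlast l)"
  have ne: "l \<noteq> []" using assms(2) by auto
  have ld: "l = butlast l @ [last l]" using ne by simp
  have sL: "?L = ?M + last l" by (subst ld) simp
  have h0: "hexp 1 (last l) (herm (last l))"
    unfolding hexp_def
  proof (intro exI[of _ "\<lambda>p. if p = last l then 1 else 0"] conjI allI impI)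
    have "(\<Sum>p\<le>last l. smult (if p = last l then 1 else 0) (herm p)) = (\<Sum>p\<le>last l. if p = last l then herm p else 0)"
      by (intro sum.cong) auto
    then show "herm (last l) = (\<Sum>p\<le>last l. smult (if p = last l then 1 else 0) (herm p))"
      by simp
  qed auto
  have "hexp ((2 * real ?L) ^ ?M * 1) (last l + ?M) (prod_list (map herm (butlast l)) * herm (last l))"
    using hexp_list[OF assms(2) h0] sL by simp
  moreover have "prod_list (map herm (butlast l)) * herm (last l) = prod_list (map herm l)"
    by (subst (2) ld) simp
  ultimately have H: "hexp ((2 * real ?L) ^ ?M) ?L (prod_list (map herm l))"
    using sL by (simp add: add.commute)
  then obtain b where b: "\<forall>p>?L. b p = 0" "\<forall>p. \<bar>b p\<bar> \<le> (2 * real ?L) ^ ?M"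
    "prod_list (map herm l) = (\<Sum>p\<le>?L. smult (b p) (herm p))"
    unfolding hexp_def by blast
  define K where "K = max N ?L"
  have e1: "(\<Sum>p\<le>N. smult (c p) (herm p)) = (\<Sum>p\<le>K. smult (c p) (herm p))"
    using assms(3) K_def by (intro sum_ext) auto
  have e2: "(\<Sum>p\<le>?L. smult (b p) (herm p)) = (\<Sum>p\<le>K. smult (b p) (herm p))"
    using b(1) K_def by (intro sum_ext) auto
  have "(\<Sum>p\<le>K. smult (c p - b p) (herm p)) = 0"
    using e1 e2 b(3) assms(4) by (simp add: smult_diff_left sum_subtractf)
  then have eq: "\<forall>p\<le>K. c p - b p = 0" by (rule herm_indep)
  have cb: "c p = b p"
  proof (cases "p \<le> K")
    case True then show ?thesis using eq by auto
  next
    case False then show ?thesis using assms(3) b(1) K_def by auto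
  qed
  have "?L - last l = ?M" using sL by simp
  then show "\<bar>c p\<bar> \<le> real (2 * ?L) ^ (?L - last l)" using cb b(2) by simp
qed

end
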